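(* Fix $\alpha\in(0,1]$ and $n\ge1$, and let $\mathcal F_n$, $\mathcal M^*$ and $\hat A$ be as in the context. Suppose that $\hat A$ is measurable and $f\in\mathcal F_n$. Then $f=f\,\mathbf 1_{\hat A}$ $m$-almost everywhere.
   Context: Let $(X,m)$ be a measure space, $A\subsetneq X$ measurable and $T:A\to X$ measurable such that: $H_0:=T(A)\setminus A$ is measurable; $m(A\cap T^{-1}H_0)>0$; $m(E)>0$ whenever $E\subseteq X$ is measurable with $m(T^{-1}E)>0$; and $T$ is locally finite-to-one (a nonsingular open dynamical system). Preimages are taken in $A$; $A_1=A\cap T^{-1}A$; $\mathbf 1_{A_1}\psi\circ T$ is $\psi\circ T$ on $A_1$ and $0$ elsewhere in $A$. Let $\psi_1,\dots,\psi_n\in L^\infty(A;m)$ with $\sum_j\psi_j=\mathbf 1_A$. Let $\mathcal F_n=\{0\le\varphi\in L^1(A;m):\int_{A_1}\varphi\,dm=\alpha,\ \int_A\varphi\,dm=1,\ \int_A[\mathbf 1_{A_1}\psi_j\circ T-\alpha\psi_j]\varphi\,dm=0,\ j=1,\dots,n\}$. Define $\mathcal M^*:\mathbb R^{n+1}\to L^\infty(A;m)$ by $\mathcal M^*\lambda=\lambda_0\mathbf 1_{A_1}+\sum_{j=1}^n\lambda_j(\mathbf 1_{A_1}\psi_j\circ T-\alpha\psi_j)$. The reduced domain $\hat A$ is obtained from $A$ by removing the support $\{\mathcal M^*\lambda\ne0\}$ of every function $\mathcal M^*\lambda$ with $\lambda\in\mathbb R^{n+1}$, $\lambda_0=0$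 and $\mathcal M^*\lambda\le0$ $m$-a.e. *)

theory Defs
  imports "HOL-Analysis.Analysis"
begin

text \<open>A is the domain, T : A -> X; preimages are taken inside A.\<close>

definition A1 :: "'a set \<Rightarrow> ('a \<Rightarrow> 'a) \<Rightarrow> 'a set" where
  "A1 A T = A \<inter> T -` A"

definition locally_finite_to_one :: "'a measure \<Rightarrow> 'a set \<Rightarrow> ('a \<Rightarrow> 'a) \<Rightarrow> bool" where
  "locally_finite_to_one M A T \<longleftrightarrow>
     (\<exists>P::nat \<Rightarrow> 'a set. (\<forall>i. P i \<in> sets M \<and> P i \<subseteq> A) \<and> (\<Union>i. P i) = A \<and>
        (\<forall>i. \<forall>y. finite (P i \<inter> T -` {y})))"

definition open_dyn_system :: "'a measure \<Rightarrow> 'a set \<Rightarrow> ('a \<Rightarrow> 'a) \<Rightarrow> bool" where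
  "open_dyn_system M A T \<longleftrightarrow>
     A \<in> sets M \<and> A \<subset> space M \<and>
     T \<in> measurable (restrict_space M A) M \<and>
     T ` A - A \<in> sets M \<and>
     emeasure M (A \<inter> T -` (T ` A - A)) > 0 \<and>
     (\<forall>E \<in> sets M. emeasure M (A \<inter> T -` E) > 0 \<longrightarrow> emeasure M E > 0) \<and>
     locally_finite_to_one M A T"

definition Linf_on :: "'a measure \<Rightarrow> 'a set \<Rightarrow> ('a \<Rightarrow> real) \<Rightarrow> bool" where
  "Linf_on M A g \<longleftrightarrow> g \<in> borel_measurable (restrict_space M A) \<and>
     (\<exists>C. AE x in M. x \<in> A \<longrightarrow> \<bar>g x\<bar> \<le> C)"

definition Fn :: "'a measure \<Rightarrow> 'a set \<Rightarrow> ('a \<Rightarrow> 'a) \<Rightarrow> (nat \<Rightarrow> 'a \<Rightarrow> real) \<Rightarrow> nat \<Rightarrow> real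
                   \<Rightarrow> ('a \<Rightarrow> real) set" where
  "Fn M A T \<psi> n \<alpha> = {\<phi>. set_integrable M A \<phi> \<and> (AE x in M. x \<in> A \<longrightarrow> 0 \<le> \<phi> x) \<and>
      (LINT x:A1 A T|M. \<phi> x) = \<alpha> \<and> (LINT x:A|M. \<phi> x) = 1 \<and>
      (\<forall>j\<in>{1..n}. (LINT x:A|M. (indicator (A1 A T) x * \<psi> j (T x) - \<alpha> * \<psi> j x) * \<phi> x) = 0)}"

text \<open>The operator M^*; lam 0 is lambda_0, lam 1..n are lambda_1..lambda_n.\<close>
definition Mstar :: "'a set \<Rightarrow> ('a \<Rightarrow> 'a) \<Rightarrow> (nat \<Rightarrow> 'a \<Rightarrow> real) \<Rightarrow> nat \<Rightarrow> real
                     \<Rightarrow> (nat \<Rightarrow> real) \<Rightarrow> 'a \<Rightarrow> real" where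
  "Mstar A T \<psi> n \<alpha> lam x = lam 0 * indicator (A1 A T) x +
      (\<Sum>j=1..n. lam j * (indicator (A1 A T) x * \<psi> j (T x) - \<alpha> * \<psi> j x))"

definition reduced_domain :: "'a measure \<Rightarrow> 'a set \<Rightarrow> ('a \<Rightarrow> 'a) \<Rightarrow> (nat \<Rightarrow> 'a \<Rightarrow> real) \<Rightarrow> nat
                              \<Rightarrow> real \<Rightarrow> 'a set" where
  "reduced_domain M A T \<psi> n \<alpha> = A - (\<Union> {{x \<in> A. Mstar A T \<psi> n \<alpha> lam x \<noteq> 0} | lam.
      lam 0 = 0 \<and> (AE x in M. x \<in> A \<longrightarrow> Mstar A T \<psi> n \<alpha> lam x \<le> 0)})"

end

theory Submission imports Defs "HOL-Library.Function_Algebras" begin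
lemma A1_sets:
  assumes "open_dyn_system M A T"
  shows "A1 A T \<in> sets M" "A1 A T \<subseteq> A" "A \<in> sets M"
proof -
  have A: "A \<in> sets M" and Tm: "T \<in> measurable (restrict_space M A) M"
    using assms unfolding open_dyn_system_def by auto
  have "T -` A \<inter> space (restrict_space M A) \<in> sets (restrict_space M A)"
    using measurable_sets[OF Tm A] .
  then have "T -` A \<inter> A \<in> sets M" using A by (simp add: sets_restrict_space_iff)
  then show "A1 A T \<in> sets M" unfolding A1_def by (simp add: Int_commute)
  show "A1 A T \<subseteq> A" unfolding A1_def by auto
  show "A \<in> sets M" by fact
qed

lemma psiT_meas:
  fixes g :: "'a \<Rightarrow> real"
  assumes "open_dyn_system M A T" "g \<in> borel_measurable (restrict_space M A)"
  shows "(\<lambda>x. g (T x) * indicator (A1 A T) x) \<in> borel_measurable M"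
proof -
  note S = A1_sets[OF assms(1)]
  have Tm: "T \<in> measurable (restrict_space M A) M"
    using assms unfolding open_dyn_system_def by auto
  have "T \<in> measurable (restrict_space (restrict_space M A) (A1 A T)) (restrict_space M A)"
    apply (rule measurable_restrict_space3[OF Tm])
    unfolding A1_def by auto
  moreover have "restrict_space (restrict_space M A) (A1 A T) = restrict_space M (A1 A T)"
    using S by (subst restrict_restrict_space) (auto simp: Int_absorb1 sets.Int_space_eq2)
  ultimately have "T \<in> measurable (restrict_space M (A1 A T)) (restrict_space M A)" by simp
  then have "(\<lambda>x. g (T x)) \<in> borel_measurable (restrict_space M (A1 A T))"
    using assms(2) by (rule measurable_compose)
  then have "(\<lambda>x. indicator (A1 A T) x *\<^sub>R g (T x)) \<in> borel_measurable M"
    using S by (subst (asm) borel_measurable_restrict_space_iff) (auto simp: sets.Int_space_eq2)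
  then show ?thesis by (simp add: mult.commute)
qed

lemma psi_meas:
  fixes g :: "'a \<Rightarrow> real"
  assumes "A \<in> sets M" "g \<in> borel_measurable (restrict_space M A)"
  shows "(\<lambda>x. g x * indicator A x) \<in> borel_measurable M"
  using assms by (subst (asm) borel_measurable_restrict_space_iff) (auto simp: sets.Int_space_eq2 mult.commute)

lemma psiT_bound:
  fixes g :: "'a \<Rightarrow> real"
  assumes "open_dyn_system M A T" "g \<in> borel_measurable (restrict_space M A)"
    "AE x in M. x \<in> A \<longrightarrow> \<bar>g x\<bar> \<le> C"
  shows "AE x in M. x \<in> A1 A T \<longrightarrow> \<bar>g (T x)\<bar> \<le> C"
proof -
  note S = A1_sets[OF assms(1)]
  have Tm: "T \<in> measurable (restrict_space M A) M"
    and ns: "\<forall>E \<in> sets M. emeasure M (A \<inter> T -` E) > 0 \<longrightarrow> emeasure M E > 0"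
    using assms unfolding open_dyn_system_def by auto
  define E where "E = {y \<in> A. C < \<bar>g y\<bar>}"
  have "{y \<in> space (restrict_space M A). C < \<bar>g y\<bar>} \<in> sets (restrict_space M A)"
    using assms(2) by measurable
  then have Es: "E \<in> sets M" using S unfolding E_def
    by (simp add: sets_restrict_space_iff sets.Int_space_eq2)
  have "{x\<in>space M. \<not> (x \<in> A \<longrightarrow> \<bar>g x\<bar> \<le> C)} = E"
    using sets.sets_into_space[OF S(3)] unfolding E_def by auto
  then have "E \<in> null_sets M" using assms(3) Es by (simp add: AE_iff_null)
  then have E0: "emeasure M E = 0" by auto
  have "T -` E \<inter> space (restrict_space M A) \<in> sets (restrict_space M A)"
    using measurable_sets[OF Tm Es] .
  then have PE: "A \<inter> T -` E \<in> sets M" using S by (simp add: sets_restrict_space_iff Int_commute)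
  have "emeasure M (A \<inter> T -` E) = 0" using ns Es E0 by (metis not_gr_zero)
  then have "A \<inter> T -` E \<in> null_sets M" using PE by auto
  then have "AE x in M. x \<notin> A \<inter> T -` E" by (rule AE_not_in)
  then show ?thesis by eventually_elim (auto simp: A1_def E_def)
qed

lemma h_integrable:
  assumes od: "open_dyn_system M A T" and L: "Linf_on M A g"
    and fi: "set_integrable M A (f::'a\<Rightarrow>real)"
  shows "integrable M (\<lambda>x. indicator A x * ((indicator (A1 A T) x * g (T x) - \<alpha> * g x) * f x))"
proof -
  note S = A1_sets[OF od]
  obtain C where gm: "g \<in> borel_measurable (restrict_space M A)" and C: "AE x in M. x \<in> A \<longrightarrow> \<bar>g x\<bar> \<le> C"
    using L unfolding Linf_on_def by auto
  have CT: "AE x in M. x \<in> A1 A T \<longrightarrow> \<bar>g (T x)\<bar> \<le> C" by (rule psiT_bound[OF od gm C])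
  have fi': "integrable M (\<lambda>x. indicator A x * f x)" using fi unfolding set_integrable_def by simp
  then have fm: "(\<lambda>x. indicator A x * f x) \<in> borel_measurable M" by auto
  have m1: "(\<lambda>x. g (T x) * indicator (A1 A T) x) \<in> borel_measurable M" by (rule psiT_meas[OF od gm])
  have m2: "(\<lambda>x. g x * indicator A x) \<in> borel_measurable M" by (rule psi_meas[OF S(3) gm])
  have eq: "(\<lambda>x. indicator A x * ((indicator (A1 A T) x * g (T x) - \<alpha> * g x) * f x))
     = (\<lambda>x. (g (T x) * indicator (A1 A T) x - \<alpha> * (g x * indicator A x)) * (indicator A x * f x))"
    using S(2) by (auto simp: indicator_def algebra_simps fun_eq_iff)
  show ?thesis unfolding eq
  proof (rule Bochner_Integration.integrable_bound[where f="\<lambda>x. (\<bar>C\<bar> + \<bar>\<alpha>\<bar> * \<bar>C\<bar>) * (indicator A x * f x)"])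
    show "integrable M (\<lambda>x. (\<bar>C\<bar> + \<bar>\<alpha>\<bar> * \<bar>C\<bar>) * (indicator A x * f x))"
      using fi' by simp
    show "(\<lambda>x. (g (T x) * indicator (A1 A T) x - \<alpha> * (g x * indicator A x)) * (indicator A x * f x)) \<in> borel_measurable M"
      using m1 m2 fm by measurable
    show "AE x in M. norm ((g (T x) * indicator (A1 A T) x - \<alpha> * (g x * indicator A x)) * (indicator A x * f x))
        \<le> norm ((\<bar>C\<bar> + \<bar>\<alpha>\<bar> * \<bar>C\<bar>) * (indicator A x * f x))"
      using C CT
    proof eventually_elim
      case (elim x)
      show ?case
      proof (cases "x \<in> A")
        case False then show ?thesis by simp
      next
        case True
        have b1: "\<bar>g (T x) * indicator (A1 A T) x\<bar> \<le> \<bar>C\<bar>"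
          using elim by (auto simp: indicator_def)
        have b2: "\<bar>\<alpha> * (g x * indicator A x)\<bar> \<le> \<bar>\<alpha>\<bar> * \<bar>C\<bar>"
          using elim True by (auto simp: indicator_def abs_mult intro!: mult_left_mono)
        have "\<bar>g (T x) * indicator (A1 A T) x - \<alpha> * (g x * indicator A x)\<bar> \<le> \<bar>C\<bar> + \<bar>\<alpha>\<bar> * \<bar>C\<bar>"
          using b1 b2 by linarith
        then show ?thesis
          by (simp add: abs_mult mult_right_mono)
      qed
    qed
  qed
qed

lemma supp_null:
  assumes od: "open_dyn_system M A T"
    and L: "\<forall>j\<in>{1..n}. Linf_on M A (\<psi> j)"
    and fF: "f \<in> Fn M A T \<psi> n \<alpha>"
    and l0: "lam 0 = 0" and neg: "AE x in M. x \<in> A \<longrightarrow> Mstar A T \<psi> n \<alpha> lam x \<le> 0"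
  shows "AE x in M. x \<in> A \<and> Mstar A T \<psi> n \<alpha> lam x \<noteq> 0 \<longrightarrow> f x = 0"
proof -
  define h where "h j x = (indicator (A1 A T) x * \<psi> j (T x) - \<alpha> * \<psi> j x) * f x" for j x
  have fi: "set_integrable M A f" and fpos: "AE x in M. x \<in> A \<longrightarrow> 0 \<le> f x"
    and cons: "\<forall>j\<in>{1..n}. (LINT x:A|M. (indicator (A1 A T) x * \<psi> j (T x) - \<alpha> * \<psi> j x) * f x) = 0"
    using fF unfolding Fn_def by auto
  have hi: "integrable M (\<lambda>x. indicator A x * h j x)" if "j \<in> {1..n}" for j
    unfolding h_def using h_integrable[OF od _ fi] L that by blast
  have h0: "integral\<^sup>L M (\<lambda>x. indicator A x * h j x) = 0" if "j \<in> {1..n}" for j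
    using cons that unfolding h_def set_lebesgue_integral_def by simp
  define G where "G x = (\<Sum>j=1..n. lam j * (indicator A x * h j x))" for x
  have Geq: "G x = indicator A x * (Mstar A T \<psi> n \<alpha> lam x * f x)" for x
    unfolding G_def Mstar_def h_def using l0
    by (simp add: sum_distrib_left sum_distrib_right algebra_simps)
  have Gi: "integrable M G" unfolding G_def using hi by (auto intro!: integrable_sum)
  have G0: "integral\<^sup>L M G = 0" unfolding G_def
    using hi h0 by (simp add: integral_sum)
  have Gneg: "AE x in M. 0 \<le> - G x" using neg fpos
    by eventually_elim (auto simp: Geq indicator_def mult_nonpos_nonneg)
  have "integral\<^sup>L M (\<lambda>x. - G x) = 0" using G0 by simp
  then have "AE x in M. - G x = 0"
    using integral_nonneg_eq_0_iff_AE[of M "\<lambda>x. - G x"] Gi Gneg by auto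
  then show ?thesis by eventually_elim (auto simp: Geq)
qed

lemma sum_fun_apply: "(\<Sum>b\<in>B. (F b :: nat \<Rightarrow> real)) j = (\<Sum>b\<in>B. F b j)"
  by (induction B rule: infinite_finite_induct) auto

lemma fin_span:
  fixes C :: "(nat \<Rightarrow> real) set"
  assumes "\<forall>lam\<in>C. \<forall>j>n. lam j = 0"
  obtains B where "finite B" "B \<subseteq> C" "\<forall>lam\<in>C. \<exists>u. lam = (\<Sum>b\<in>B. (\<lambda>j. u b * b j))"
proof -
  interpret V: vector_space "\<lambda>(c::real) (f::nat\<Rightarrow>real). (\<lambda>x. c * f x)"
    by unfold_locales (auto simp: algebra_simps fun_eq_iff)
  obtain B where B: "B \<subseteq> C" "V.independent B" "C \<subseteq> V.span B"
    using V.maximal_independent_subset by blast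
  define E where "E = (\<lambda>i. \<lambda>j. if j = i then 1 else (0::real)) ` {0..n}"
  have "C \<subseteq> V.span E"
  proof
    fix lam assume "lam \<in> C"
    then have "lam = (\<Sum>i\<in>{0..n}. (\<lambda>j. lam i * (if j = i then 1 else 0)))"
      using assms by (auto simp: fun_eq_iff sum_fun_apply if_distrib sum.delta' cong: if_cong)
    also have "\<dots> \<in> V.span E"
      unfolding E_def by (intro V.span_sum V.span_scale V.span_base) auto
    finally show "lam \<in> V.span E" .
  qed
  then have "B \<subseteq> V.span E" using B by blast
  then have fB: "finite B" using V.independent_span_bound[of E B] B(2) unfolding E_def by auto
  have "\<forall>lam\<in>C. \<exists>u. lam = (\<Sum>b\<in>B. (\<lambda>j. u b * b j))"
    using B(3) V.span_finite[OF fB] by blast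
  then show ?thesis using that fB B(1) by blast
qed

lemma Mstar_lin:
  "Mstar A T \<psi> n \<alpha> (\<Sum>b\<in>B. (\<lambda>j. u b * b j)) x = (\<Sum>b\<in>B. u b * Mstar A T \<psi> n \<alpha> b x)"
proof -
  have "(\<Sum>j=1..n. (\<Sum>b\<in>B. u b * b j) * (indicator (A1 A T) x * \<psi> j (T x) - \<alpha> * \<psi> j x))
     = (\<Sum>j=1..n. \<Sum>b\<in>B. u b * (b j * (indicator (A1 A T) x * \<psi> j (T x) - \<alpha> * \<psi> j x)))"
    by (simp add: sum_distrib_right mult.assoc)
  also have "\<dots> = (\<Sum>b\<in>B. \<Sum>j=1..n. u b * (b j * (indicator (A1 A T) x * \<psi> j (T x) - \<alpha> * \<psi> j x)))"
    by (rule sum.swap)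
  finally have 1: "(\<Sum>j=1..n. (\<Sum>b\<in>B. u b * b j) * (indicator (A1 A T) x * \<psi> j (T x) - \<alpha> * \<psi> j x))
     = (\<Sum>b\<in>B. u b * (\<Sum>j=1..n. b j * (indicator (A1 A T) x * \<psi> j (T x) - \<alpha> * \<psi> j x)))"
    by (simp add: sum_distrib_left)
  show ?thesis
    unfolding Mstar_def sum_fun_apply 1
    by (simp add: sum_distrib_right sum.distrib algebra_simps sum_distrib_left)
qed

lemma Mstar_tr:
  "Mstar A T \<psi> n \<alpha> (\<lambda>j. if j \<le> n then lam j else 0) x = Mstar A T \<psi> n \<alpha> lam x"
  unfolding Mstar_def by (auto intro!: sum.cong)

theorem lemma5:
  fixes M :: "'a measure" and A :: "'a set" and T :: "'a \<Rightarrow> 'a"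
    and \<psi> :: "nat \<Rightarrow> 'a \<Rightarrow> real" and n :: nat and \<alpha> :: real and f :: "'a \<Rightarrow> real"
  assumes "open_dyn_system M A T"
    and "0 < \<alpha>" and "\<alpha> \<le> 1" and "1 \<le> n"
    and "\<forall>j\<in>{1..n}. Linf_on M A (\<psi> j)"
    and "AE x in M. x \<in> A \<longrightarrow> (\<Sum>j=1..n. \<psi> j x) = 1"
    and "reduced_domain M A T \<psi> n \<alpha> \<in> sets M"
    and "f \<in> Fn M A T \<psi> n \<alpha>"
  shows "AE x in M. x \<in> A \<longrightarrow> f x = f x * indicator (reduced_domain M A T \<psi> n \<alpha>) x"
proof -
  let ?Ms = "Mstar A T \<psi> n \<alpha>"
  define C where "C = {lam. lam 0 = 0 \<and> (AE x in M. x \<in> A \<longrightarrow> ?Ms lam x \<le> 0)}"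
  define tr where "tr lam = (\<lambda>j. if j \<le> n then lam j else (0::real))" for lam :: "nat \<Rightarrow> real"
  have trM: "?Ms (tr lam) x = ?Ms lam x" for lam x unfolding tr_def by (rule Mstar_tr)
  have C'C: "tr ` C \<subseteq> C" unfolding C_def using trM by (auto simp: tr_def)
  have "\<forall>lam\<in>tr ` C. \<forall>j>n. lam j = 0" by (auto simp: tr_def)
  then obtain B where B: "finite B" "B \<subseteq> tr ` C" "\<forall>lam\<in>tr ` C. \<exists>u. lam = (\<Sum>b\<in>B. (\<lambda>j. u b * b j))"
    by (rule fin_span[of "tr ` C" n])
  have "AE x in M. \<forall>b\<in>B. x \<in> A \<and> ?Ms b x \<noteq> 0 \<longrightarrow> f x = 0"
  proof (rule AE_finite_allI[OF B(1)])
    fix b assume "b \<in> B"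
    then have "b \<in> C" using B(2) C'C by blast
    then show "AE x in M. x \<in> A \<and> ?Ms b x \<noteq> 0 \<longrightarrow> f x = 0"
      using supp_null[OF assms(1) assms(5) assms(8)] unfolding C_def by blast
  qed
  then show ?thesis
  proof eventually_elim
    case (elim x)
    show ?case
    proof (intro impI)
      assume xA: "x \<in> A"
      show "f x = f x * indicator (reduced_domain M A T \<psi> n \<alpha>) x"
      proof (cases "x \<in> reduced_domain M A T \<psi> n \<alpha>")
        case True then show ?thesis by simp
      next
        case False
        then obtain lam where lam: "lam \<in> C" "?Ms lam x \<noteq> 0"
          using xA unfolding reduced_domain_def C_def by auto
        obtain u where u: "tr lam = (\<Sum>b\<in>B. (\<lambda>j. u b * b j))" using B(3) lam(1) by blast
        have "(\<Sum>b\<in>B. u b * ?Ms b x) \<noteq> 0"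
          using lam(2) trM[of lam x] u Mstar_lin[where B=B and u=u and x=x and A=A and T=T and \<psi>=\<psi> and n=n and \<alpha>=\<alpha>] by simp
        then obtain b where "b \<in> B" "?Ms b x \<noteq> 0"
          by (metis (no_types, lifting) mult_zero_right sum.neutral)
        then have "f x = 0" using elim xA by blast
        then show ?thesis by simp
      qed
    qed
  qed
qed

end
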